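(* Every ergodic infinite permutation $\alpha$ has exactly one canonical representative.
   Context: An infinite permutation is an equivalence class of infinite real sequences $(a[n])_{n\ge 0}$ with pairwise distinct elements, under the relation $(a[n])\sim(b[n])$ iff for all $i,j$: $a[i]<a[j]\Leftrightarrow b[i]<b[j]$; any sequence in the class is a representative, and we write $\alpha[i]<\alpha[j]$ iff $a[i]<a[j]$ for a representative. A real sequence $(a[i])_{i\ge0}$ is canonical if (i) its elements are pairwise distinct, (ii) $0\le a[i]\le 1$ for all $i$, and (iii) for every $t\in[0,1]$ the ratio $\#\{0\le k<n : a[j+k]<t\}/n$ tends to $t$ as $n\to\infty$, uniformly in $j\ge 0$. An infinite permutation is ergodic if it has a canonical representative. *)

theory Defs
  imports Complex_Main
begin

definition order_equiv :: "(nat \<Rightarrow> real) \<Rightarrow> (nat \<Rightarrow> real) \<Rightarrow> bool" where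
  "order_equiv a b \<longleftrightarrow> (\<forall>i j. a i < a j \<longleftrightarrow> b i < b j)"

definition inf_perm :: "(nat \<Rightarrow> real) set \<Rightarrow> bool" where
  "inf_perm \<alpha> \<longleftrightarrow> (\<exists>a. inj a \<and> \<alpha> = {b. inj b \<and> order_equiv a b})"

definition canonical :: "(nat \<Rightarrow> real) \<Rightarrow> bool" where
  "canonical a \<longleftrightarrow> inj a \<and> (\<forall>i. 0 \<le> a i \<and> a i \<le> 1) \<and>
     (\<forall>t\<in>{0..1}. \<forall>\<epsilon>>0. \<exists>N. \<forall>n\<ge>N. \<forall>j.
        \<bar>real (card {k. k < n \<and> a (j + k) < t}) / real n - t\<bar> < \<epsilon>)"

definition ergodic :: "(nat \<Rightarrow> real) set \<Rightarrow> bool" where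
  "ergodic \<alpha> \<longleftrightarrow> inf_perm \<alpha> \<and> (\<exists>a\<in>\<alpha>. canonical a)"

end

theory Submission
  imports Defs
begin

lemma canon_eq:
  assumes ca: "canonical a" and cb: "canonical b"
    and oe: "\<And>x y. a x < a y \<longleftrightarrow> b x < b y"
  shows "a = b"
proof
  fix i
  show "a i = b i"
  proof (rule ccontr)
    assume ne: "a i \<noteq> b i"
    define e where "e = \<bar>a i - b i\<bar> / 2"
    have e: "e > 0" using ne by (simp add: e_def)
    have ai: "a i \<in> {0..1}" and bi: "b i \<in> {0..1}" using ca cb by (auto simp: canonical_def)
    obtain N1 where N1: "\<forall>n\<ge>N1. \<forall>j. \<bar>real (card {k. k < n \<and> a (j + k) < a i}) / real n - a i\<bar> < e"
      using ca ai e unfolding canonical_def by blast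
    obtain N2 where N2: "\<forall>n\<ge>N2. \<forall>j. \<bar>real (card {k. k < n \<and> b (j + k) < b i}) / real n - b i\<bar> < e"
      using cb bi e unfolding canonical_def by blast
    define n where "n = max N1 N2"
    have s: "{k. k < n \<and> a (0 + k) < a i} = {k. k < n \<and> b (0 + k) < b i}" using oe by auto
    have 1: "\<bar>real (card {k. k < n \<and> a (0 + k) < a i}) / real n - a i\<bar> < e"
      using N1[rule_format, of n 0] n_def by simp
    have 2: "\<bar>real (card {k. k < n \<and> a (0 + k) < a i}) / real n - b i\<bar> < e"
      using N2[rule_format, of n 0] n_def s by simp
    define q where "q = real (card {k. k < n \<and> a (0 + k) < a i}) / real n"
    from 1 2 have "\<bar>q - a i\<bar> < \<bar>a i - b i\<bar> / 2" "\<bar>q - b i\<bar> < \<bar>a i - b i\<bar> / 2"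
      unfolding e_def q_def by auto
    then show False by (cases "q \<le> a i"; cases "q \<le> b i"; cases "a i \<le> b i") (auto simp: abs_if split: if_splits)
  qed
qed

theorem mainTheorem1:
  assumes "inf_perm \<alpha>" and "ergodic \<alpha>"
  shows "\<exists>!a. a \<in> \<alpha> \<and> canonical a"
proof -
  obtain a0 where a0: "\<alpha> = {b. inj b \<and> order_equiv a0 b}"
    using assms(1) unfolding inf_perm_def by blast
  obtain a where a: "a \<in> \<alpha>" "canonical a" using assms(2) unfolding ergodic_def by blast
  show ?thesis
  proof (rule ex1I[of _ a])
    show "a \<in> \<alpha> \<and> canonical a" using a by blast
  next
    fix b assume b: "b \<in> \<alpha> \<and> canonical b"
    have "\<And>x y. b x < b y \<longleftrightarrow> a x < a y"
      using a(1) b a0 unfolding order_equiv_def by auto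
    then show "b = a" using canon_eq[of b a] b a(2) by blast
  qed
qed

end
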